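(* Let $D$ be a locatable digraph of order $n$ with $\gamma_{OL}(D)=n$. If a vertex of $D$ is not domination-forced, then it is location-forced; and if a vertex of $D$ is not location-forced, then it is domination-forced.
   Context: Digraphs are finite and may contain loops; between two distinct vertices there may be arcs in one or both directions, no repeated arcs. $N^-(v)=\{u: uv\text{ is an arc}\}$ (contains $v$ iff $v$ has a loop). An OLD set of $D$ is a set $S\subseteq V(D)$ such that every vertex has an in-neighbour in $S$ and for every two distinct vertices $u,w$ some vertex of $S$ lies in exactly one of $N^-(u),N^-(w)$. $D$ is locatable if it has an OLD set, and then $\gamma_{OL}(D)$ is the minimum size of an OLD set. A vertex $v$ is domination-forced if some vertex $w$ has $N^-(w)=\{v\}$; it is location-forced if there are distinct vertices $x,y$ with $N^-(x)\ominus N^-(y)=\{v\}$ ($\ominus$ = symmetric difference). *)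

theory Defs
  imports Main
begin

text \<open>Loops allowed; no repeated arcs automatically.\<close>

definition digraph :: "'a set \<Rightarrow> ('a \<Rightarrow> 'a \<Rightarrow> bool) \<Rightarrow> bool" where
  "digraph V arc \<longleftrightarrow> finite V \<and> (\<forall>u v. arc u v \<longrightarrow> u \<in> V \<and> v \<in> V)"

definition in_nbhd :: "'a set \<Rightarrow> ('a \<Rightarrow> 'a \<Rightarrow> bool) \<Rightarrow> 'a \<Rightarrow> 'a set" where
  "in_nbhd V arc v = {u \<in> V. arc u v}"

definition is_OLD_set :: "'a set \<Rightarrow> ('a \<Rightarrow> 'a \<Rightarrow> bool) \<Rightarrow> 'a set \<Rightarrow> bool" where
  "is_OLD_set V arc S \<longleftrightarrow> S \<subseteq> V
     \<and> (\<forall>v\<in>V. in_nbhd V arc v \<inter> S \<noteq> {})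
     \<and> (\<forall>u\<in>V. \<forall>w\<in>V. u \<noteq> w \<longrightarrow>
          (\<exists>s\<in>S. (s \<in> in_nbhd V arc u) \<noteq> (s \<in> in_nbhd V arc w)))"

definition locatable :: "'a set \<Rightarrow> ('a \<Rightarrow> 'a \<Rightarrow> bool) \<Rightarrow> bool" where
  "locatable V arc \<longleftrightarrow> (\<exists>S. is_OLD_set V arc S)"

definition gamma_OL :: "'a set \<Rightarrow> ('a \<Rightarrow> 'a \<Rightarrow> bool) \<Rightarrow> nat" where
  "gamma_OL V arc = (LEAST k. \<exists>S. is_OLD_set V arc S \<and> card S = k)"

definition domination_forced :: "'a set \<Rightarrow> ('a \<Rightarrow> 'a \<Rightarrow> bool) \<Rightarrow> 'a \<Rightarrow> bool" where
  "domination_forced V arc v \<longleftrightarrow> (\<exists>w\<in>V. in_nbhd V arc w = {v})"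

definition location_forced :: "'a set \<Rightarrow> ('a \<Rightarrow> 'a \<Rightarrow> bool) \<Rightarrow> 'a \<Rightarrow> bool" where
  "location_forced V arc v \<longleftrightarrow> (\<exists>x\<in>V. \<exists>y\<in>V. x \<noteq> y \<and>
      (in_nbhd V arc x - in_nbhd V arc y) \<union> (in_nbhd V arc y - in_nbhd V arc x) = {v})"

end

theory Submission
  imports Defs
begin

theorem corollary6:
  fixes V :: "'a set" and arc :: "'a \<Rightarrow> 'a \<Rightarrow> bool" and n :: nat
  assumes "digraph V arc"
    and "card V = n"
    and "locatable V arc"
    and "gamma_OL V arc = n"
    and "v \<in> V"
  shows "(\<not> domination_forced V arc v \<longrightarrow> location_forced V arc v)
     \<and> (\<not> location_forced V arc v \<longrightarrow> domination_forced V arc v)"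
proof -
  have fin: "finite V" using assms(1) unfolding digraph_def by simp
  obtain S where S: "is_OLD_set V arc S" using assms(3) unfolding locatable_def by blast
  have VO: "is_OLD_set V arc V" using S unfolding is_OLD_set_def by blast
  have sub: "\<And>x. in_nbhd V arc x \<subseteq> V" unfolding in_nbhd_def by auto
  have notO: "\<not> is_OLD_set V arc (V - {v})"
  proof
    assume h: "is_OLD_set V arc (V - {v})"
    have "gamma_OL V arc \<le> card (V - {v})"
      unfolding gamma_OL_def by (rule Least_le) (use h in blast)
    moreover have "card (V - {v}) < n" using fin assms(2,5)
      by (metis card_Diff1_less)
    ultimately show False using assms(4) by simp
  qed
  have "domination_forced V arc v \<or> location_forced V arc v"
  proof (cases "\<forall>x\<in>V. in_nbhd V arc x \<inter> (V - {v}) \<noteq> {}")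
    case False
    then obtain w where w: "w \<in> V" "in_nbhd V arc w \<inter> (V - {v}) = {}" by blast
    have "in_nbhd V arc w \<inter> V \<noteq> {}" using VO w(1) unfolding is_OLD_set_def by blast
    hence "in_nbhd V arc w = {v}" using w(2) sub[of w] by blast
    thus ?thesis using w(1) unfolding domination_forced_def by blast
  next
    case True
    then obtain x y where xy: "x \<in> V" "y \<in> V" "x \<noteq> y"
      "\<forall>s\<in>V - {v}. (s \<in> in_nbhd V arc x) = (s \<in> in_nbhd V arc y)"
      using notO unfolding is_OLD_set_def by blast
    obtain s where s: "s \<in> V" "(s \<in> in_nbhd V arc x) \<noteq> (s \<in> in_nbhd V arc y)"
      using VO xy(1-3) unfolding is_OLD_set_def by blast
    have "s = v" using s xy(4) by blast
    hence "(in_nbhd V arc x - in_nbhd V arc y) \<union> (in_nbhd V arc y - in_nbhd V arc x) = {v}"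
      using s xy(4) sub[of x] sub[of y] by blast
    thus ?thesis using xy unfolding location_forced_def by blast
  qed
  thus ?thesis by blast
qed

end
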